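(* Consider the 2NC-TAP instance with node set $\{r,v_1,v_2,v_3,p_1,p_2,p_3,q_1,q_2,q_3\}$, tree $T$ with edges $rv_i$, $v_ip_i$, $v_iq_i$ for $i=1,2,3$ (all of cost $0$), and six links of cost $1$: $p_1p_2,p_2p_3,p_3p_1,q_1q_2,q_2q_3,q_3q_1$. Then every feasible link set has cost at least $4$ (and there is one of cost $4$), while the vector $\hat x$ with $\hat x_\ell=\frac12$ for all six links is feasible for the partition LP $(P)$ and has cost $3$. Consequently the integrality ratio of $(P)$ for 2NC-TAP is at least $\frac43$.
   Context: An instance of 2NC-TAP consists of a simple undirected graph $G=(V,E)$, a spanning tree $T$ of $G$ with cost-$0$ edges, and nonnegative costs on the links $L(G)=E\setminus T$; a link set $F$ is feasible if $(V,T\cup F)$ is 2-node connected. Let $N(T)$ be the set of non-leaf nodes of $T$. For $u\in N(T)$, let $\Pi_u$ be the set of partitions $\mathcal P$ of $V\setminus\{u\}$ such that the vertex set of each connected component of $T-u$ is contained in a set of $\mathcal P$. A link crosses $\mathcal P\in\Pi_u$ if neither end node is $u$ and its end nodes lie in different sets of $\mathcal P$. Partition LP $(P)$: minimize $\sum_\ell\mathrm{cost}(\ell)x_\ell$ subject to $\sum_{\ell\text{ crosses }\mathcal P}x_\ell\ge|\mathcal P|-1$ for all $u\in N(T)$, $\mathcal P\in\Pi_u$, and $x\ge 0$. *)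

theory Defs
  imports Complex_Main "HOL-Library.Disjoint_Sets"
begin

definition adj_in :: "'a set \<Rightarrow> 'a set set \<Rightarrow> ('a \<times> 'a) set" where
  "adj_in W E = {(a, b). {a, b} \<in> E \<and> a \<noteq> b \<and> a \<in> W \<and> b \<in> W}"

definition connected_on :: "'a set \<Rightarrow> 'a set set \<Rightarrow> bool" where
  "connected_on W E \<longleftrightarrow> (\<forall>x\<in>W. \<forall>y\<in>W. (x, y) \<in> (adj_in W E)\<^sup>*)"

definition two_node_connected :: "'a set \<Rightarrow> 'a set set \<Rightarrow> bool" where
  "two_node_connected W E \<longleftrightarrow> finite W \<and> card W \<ge> 3 \<and> connected_on W E \<and>
     (\<forall>u\<in>W. connected_on (W - {u}) E)"

definition degree :: "'a set set \<Rightarrow> 'a \<Rightarrow> nat" where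
  "degree E x = card {e \<in> E. x \<in> e}"

definition nonleaf_nodes :: "'a set \<Rightarrow> 'a set set \<Rightarrow> 'a set" where
  "nonleaf_nodes V T = {x \<in> V. degree T x \<ge> 2}"

definition comp_minus :: "'a set \<Rightarrow> 'a set set \<Rightarrow> 'a \<Rightarrow> 'a \<Rightarrow> 'a set" where
  "comp_minus V T u x = {y \<in> V - {u}. (x, y) \<in> (adj_in (V - {u}) T)\<^sup>*}"

definition Pi_u :: "'a set \<Rightarrow> 'a set set \<Rightarrow> 'a \<Rightarrow> 'a set set set" where
  "Pi_u V T u = {P. partition_on (V - {u}) P \<and>
      (\<forall>x\<in>V - {u}. \<exists>S\<in>P. comp_minus V T u x \<subseteq> S)}"

definition crosses :: "'a \<Rightarrow> 'a set set \<Rightarrow> 'a set \<Rightarrow> bool" where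
  "crosses u P l \<longleftrightarrow> u \<notin> l \<and> \<not> (\<exists>S\<in>P. l \<subseteq> S)"

definition partition_lp_feasible ::
  "'a set \<Rightarrow> 'a set set \<Rightarrow> 'a set set \<Rightarrow> ('a set \<Rightarrow> real) \<Rightarrow> bool" where
  "partition_lp_feasible V T L x \<longleftrightarrow> (\<forall>l\<in>L. x l \<ge> 0) \<and>
     (\<forall>u\<in>nonleaf_nodes V T. \<forall>P\<in>Pi_u V T u.
        (\<Sum>l\<in>{l\<in>L. crosses u P l}. x l) \<ge> real (card P) - 1)"

definition tap_feasible :: "'a set \<Rightarrow> 'a set set \<Rightarrow> 'a set set \<Rightarrow> 'a set set \<Rightarrow> bool" where
  "tap_feasible V T L F \<longleftrightarrow> F \<subseteq> L \<and> two_node_connected V (T \<union> F)"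

datatype node = R | V1 | V2 | V3 | P1 | P2 | P3 | Q1 | Q2 | Q3

definition ex_V :: "node set" where
  "ex_V = {R, V1, V2, V3, P1, P2, P3, Q1, Q2, Q3}"

definition ex_T :: "node set set" where
  "ex_T = {{R, V1}, {R, V2}, {R, V3}, {V1, P1}, {V2, P2}, {V3, P3},
           {V1, Q1}, {V2, Q2}, {V3, Q3}}"

definition ex_L :: "node set set" where
  "ex_L = {{P1, P2}, {P2, P3}, {P3, P1}, {Q1, Q2}, {Q2, Q3}, {Q3, Q1}}"

definition ex_cost :: "node set \<Rightarrow> real" where
  "ex_cost l = (if l \<in> ex_L then 1 else 0)"

definition x_hat :: "node set \<Rightarrow> real" where
  "x_hat l = (if l \<in> ex_L then 1/2 else 0)"

end

theory Submission imports Defs begin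

lemma adj_sym: "sym (adj_in W E)"
  by (auto simp: sym_def adj_in_def insert_commute)

lemma conn_hub:
  assumes "\<forall>x\<in>W. (h,x) \<in> (adj_in W E)\<^sup>*"
  shows "connected_on W E"
  unfolding connected_on_def
proof (intro ballI)
  fix x y assume "x \<in> W" "y \<in> W"
  hence "(h,x) \<in> (adj_in W E)\<^sup>*" "(h,y) \<in> (adj_in W E)\<^sup>*" using assms by auto
  moreover have "sym ((adj_in W E)\<^sup>*)" by (rule sym_rtrancl[OF adj_sym])
  ultimately have "(x,h) \<in> (adj_in W E)\<^sup>*" by (meson symD)
  thus "(x,y) \<in> (adj_in W E)\<^sup>*" using \<open>(h,y) \<in> _\<close> by (rule rtrancl_trans)
qed

lemma no_nbr:
  assumes "(x,z) \<in> r\<^sup>*" "\<And>y. (x,y) \<notin> r" shows "z = x"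
  using assms by (auto elim: converse_rtranclE)

lemma part_same:
  assumes "partition_on A P" "S \<in> P" "S' \<in> P" "x \<in> S" "x \<in> S'" shows "S = S'"
  using partition_onD2[OF assms(1)] assms(2-5) by (auto simp: disjoint_def)

lemma part_blocks:
  assumes P: "P \<in> Pi_u V T u"
    and c: "\<forall>x\<in>V-{u}. c x \<in> {a1,a2,a3} \<and> (c x, x) \<in> (adj_in (V-{u}) T)\<^sup>*"
    and a: "a1 \<in> V-{u}" "a2 \<in> V-{u}" "a3 \<in> V-{u}"
  shows "\<exists>B. P = {B a1, B a2, B a3} \<and>
     (\<forall>x\<in>V-{u}. \<forall>y\<in>V-{u}. crosses u P {x,y} \<longleftrightarrow> B (c x) \<noteq> B (c y))"
proof -
  have pa: "partition_on (V-{u}) P" and cm: "\<forall>x\<in>V-{u}. \<exists>S\<in>P. comp_minus V T u x \<subseteq> S"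
    using P by (auto simp: Pi_u_def)
  define B where "B a = (SOME S. S \<in> P \<and> a \<in> S)" for a
  have Bin: "B a \<in> P \<and> a \<in> B a" if "a \<in> V-{u}" for a
  proof -
    have "\<exists>S. S \<in> P \<and> a \<in> S" using partition_onD1[OF pa] that by auto
    thus ?thesis unfolding B_def by (rule someI_ex)
  qed
  have cin: "c x \<in> V-{u}" if "x \<in> V-{u}" for x using c a that by auto
  have key: "\<And>S. S \<in> P \<Longrightarrow> x \<in> S \<Longrightarrow> S = B (c x)" if x: "x \<in> V-{u}" for x
  proof -
    fix S assume S: "S \<in> P" "x \<in> S"
    obtain S' where S': "S' \<in> P" "comp_minus V T u (c x) \<subseteq> S'" using cm cin[OF x] by blast
    have "c x \<in> comp_minus V T u (c x)" using cin[OF x] by (simp add: comp_minus_def)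
    hence "S' = B (c x)" using part_same[OF pa S'(1), of "B (c x)" "c x"] Bin[OF cin[OF x]] S' by auto
    moreover have "x \<in> comp_minus V T u (c x)" using c x by (simp add: comp_minus_def)
    ultimately have "x \<in> B (c x)" using S' by auto
    thus "S = B (c x)" using part_same[OF pa S(1), of "B (c x)" x] Bin[OF cin[OF x]] S by auto
  qed
  have xin: "x \<in> B (c x)" if xx: "x \<in> V-{u}" for x
  proof -
    have "x \<in> \<Union>P" using partition_onD1[OF pa] xx by auto
    then obtain S where "S \<in> P" "x \<in> S" by auto
    thus ?thesis using key[OF xx] by auto
  qed
  have "P = {B a1, B a2, B a3}"
  proof
    show "P \<subseteq> {B a1, B a2, B a3}"
    proof
      fix S assume S: "S \<in> P"
      then obtain x where "x \<in> S" using partition_onD3[OF pa] by (metis all_not_in_conv)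
      moreover have "x \<in> V-{u}" using partition_onD1[OF pa] S \<open>x \<in> S\<close> by auto
      ultimately have "S = B (c x)" using key S by auto
      thus "S \<in> {B a1, B a2, B a3}" using c \<open>x \<in> V-{u}\<close> by auto
    qed
    show "{B a1, B a2, B a3} \<subseteq> P" using Bin a by auto
  qed
  moreover have "\<forall>x\<in>V-{u}. \<forall>y\<in>V-{u}. crosses u P {x,y} \<longleftrightarrow> B (c x) \<noteq> B (c y)"
  proof (intro ballI)
    fix x y assume x: "x \<in> V-{u}" and y: "y \<in> V-{u}"
    have "(\<exists>S\<in>P. {x,y} \<subseteq> S) \<longleftrightarrow> B (c x) = B (c y)"
    proof
      assume "\<exists>S\<in>P. {x,y} \<subseteq> S"
      then obtain S where "S \<in> P" "x \<in> S" "y \<in> S" by auto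
      thus "B (c x) = B (c y)" using key[OF x] key[OF y] by metis
    next
      assume "B (c x) = B (c y)"
      thus "\<exists>S\<in>P. {x,y} \<subseteq> S" using xin[OF x] xin[OF y] Bin[OF cin[OF x]] by auto
    qed
    thus "crosses u P {x,y} \<longleftrightarrow> B (c x) \<noteq> B (c y)" using x y by (auto simp: crosses_def)
  qed
  ultimately show ?thesis by blast
qed

definition F0 :: "node set set" where "F0 = {{P1,P2},{P2,P3},{Q1,Q2},{Q2,Q3}}"

lemma finite_ex_L: "finite ex_L" by (simp add: ex_L_def)

lemma conn_F0_all: "connected_on (ex_V) (ex_T \<union> F0)"
proof -
  have f_R_R: "(R,R) \<in> (adj_in (ex_V) (ex_T \<union> F0))\<^sup>*" by simp
  have f_R_V1: "(R,V1) \<in> (adj_in (ex_V) (ex_T \<union> F0))\<^sup>*" by (rule rtrancl_into_rtrancl[OF f_R_R]) (simp add: adj_in_def ex_V_def ex_T_def F0_def doubleton_eq_iff)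
  have f_R_V2: "(R,V2) \<in> (adj_in (ex_V) (ex_T \<union> F0))\<^sup>*" by (rule rtrancl_into_rtrancl[OF f_R_R]) (simp add: adj_in_def ex_V_def ex_T_def F0_def doubleton_eq_iff)
  have f_R_V3: "(R,V3) \<in> (adj_in (ex_V) (ex_T \<union> F0))\<^sup>*" by (rule rtrancl_into_rtrancl[OF f_R_R]) (simp add: adj_in_def ex_V_def ex_T_def F0_def doubleton_eq_iff)
  have f_R_P1: "(R,P1) \<in> (adj_in (ex_V) (ex_T \<union> F0))\<^sup>*" by (rule rtrancl_into_rtrancl[OF f_R_V1]) (simp add: adj_in_def ex_V_def ex_T_def F0_def doubleton_eq_iff)
  have f_R_Q1: "(R,Q1) \<in> (adj_in (ex_V) (ex_T \<union> F0))\<^sup>*" by (rule rtrancl_into_rtrancl[OF f_R_V1]) (simp add: adj_in_def ex_V_def ex_T_def F0_def doubleton_eq_iff)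
  have f_R_P2: "(R,P2) \<in> (adj_in (ex_V) (ex_T \<union> F0))\<^sup>*" by (rule rtrancl_into_rtrancl[OF f_R_V2]) (simp add: adj_in_def ex_V_def ex_T_def F0_def doubleton_eq_iff)
  have f_R_Q2: "(R,Q2) \<in> (adj_in (ex_V) (ex_T \<union> F0))\<^sup>*" by (rule rtrancl_into_rtrancl[OF f_R_V2]) (simp add: adj_in_def ex_V_def ex_T_def F0_def doubleton_eq_iff)
  have f_R_P3: "(R,P3) \<in> (adj_in (ex_V) (ex_T \<union> F0))\<^sup>*" by (rule rtrancl_into_rtrancl[OF f_R_V3]) (simp add: adj_in_def ex_V_def ex_T_def F0_def doubleton_eq_iff)
  have f_R_Q3: "(R,Q3) \<in> (adj_in (ex_V) (ex_T \<union> F0))\<^sup>*" by (rule rtrancl_into_rtrancl[OF f_R_V3]) (simp add: adj_in_def ex_V_def ex_T_def F0_def doubleton_eq_iff)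
  have W: "ex_V = {R, V1, V2, V3, P1, P2, P3, Q1, Q2, Q3}" by (auto simp: ex_V_def)
  have "\<forall>x\<in>{R, V1, V2, V3, P1, P2, P3, Q1, Q2, Q3}. (R,x) \<in> (adj_in (ex_V) (ex_T \<union> F0))\<^sup>*" using f_R_R f_R_V1 f_R_V2 f_R_V3 f_R_P1 f_R_Q1 f_R_P2 f_R_Q2 f_R_P3 f_R_Q3 by simp
  hence "\<forall>x\<in>ex_V. (R,x) \<in> (adj_in (ex_V) (ex_T \<union> F0))\<^sup>*" by (simp only: W)
  thus ?thesis by (rule conn_hub)
qed

lemma conn_F0_R: "connected_on (ex_V - {R}) (ex_T \<union> F0)"
proof -
  have f_V1_V1: "(V1,V1) \<in> (adj_in (ex_V - {R}) (ex_T \<union> F0))\<^sup>*" by simp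
  have f_V1_P1: "(V1,P1) \<in> (adj_in (ex_V - {R}) (ex_T \<union> F0))\<^sup>*" by (rule rtrancl_into_rtrancl[OF f_V1_V1]) (simp add: adj_in_def ex_V_def ex_T_def F0_def doubleton_eq_iff)
  have f_V1_Q1: "(V1,Q1) \<in> (adj_in (ex_V - {R}) (ex_T \<union> F0))\<^sup>*" by (rule rtrancl_into_rtrancl[OF f_V1_V1]) (simp add: adj_in_def ex_V_def ex_T_def F0_def doubleton_eq_iff)
  have f_V1_P2: "(V1,P2) \<in> (adj_in (ex_V - {R}) (ex_T \<union> F0))\<^sup>*" by (rule rtrancl_into_rtrancl[OF f_V1_P1]) (simp add: adj_in_def ex_V_def ex_T_def F0_def doubleton_eq_iff)
  have f_V1_Q2: "(V1,Q2) \<in> (adj_in (ex_V - {R}) (ex_T \<union> F0))\<^sup>*" by (rule rtrancl_into_rtrancl[OF f_V1_Q1]) (simp add: adj_in_def ex_V_def ex_T_def F0_def doubleton_eq_iff)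
  have f_V1_V2: "(V1,V2) \<in> (adj_in (ex_V - {R}) (ex_T \<union> F0))\<^sup>*" by (rule rtrancl_into_rtrancl[OF f_V1_P2]) (simp add: adj_in_def ex_V_def ex_T_def F0_def doubleton_eq_iff)
  have f_V1_P3: "(V1,P3) \<in> (adj_in (ex_V - {R}) (ex_T \<union> F0))\<^sup>*" by (rule rtrancl_into_rtrancl[OF f_V1_P2]) (simp add: adj_in_def ex_V_def ex_T_def F0_def doubleton_eq_iff)
  have f_V1_Q3: "(V1,Q3) \<in> (adj_in (ex_V - {R}) (ex_T \<union> F0))\<^sup>*" by (rule rtrancl_into_rtrancl[OF f_V1_Q2]) (simp add: adj_in_def ex_V_def ex_T_def F0_def doubleton_eq_iff)
  have f_V1_V3: "(V1,V3) \<in> (adj_in (ex_V - {R}) (ex_T \<union> F0))\<^sup>*" by (rule rtrancl_into_rtrancl[OF f_V1_P3]) (simp add: adj_in_def ex_V_def ex_T_def F0_def doubleton_eq_iff)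
  have W: "ex_V - {R} = {V1, V2, V3, P1, P2, P3, Q1, Q2, Q3}" by (auto simp: ex_V_def)
  have "\<forall>x\<in>{V1, V2, V3, P1, P2, P3, Q1, Q2, Q3}. (V1,x) \<in> (adj_in (ex_V - {R}) (ex_T \<union> F0))\<^sup>*" using f_V1_V1 f_V1_P1 f_V1_Q1 f_V1_P2 f_V1_Q2 f_V1_V2 f_V1_P3 f_V1_Q3 f_V1_V3 by simp
  hence "\<forall>x\<in>ex_V - {R}. (V1,x) \<in> (adj_in (ex_V - {R}) (ex_T \<union> F0))\<^sup>*" by (simp only: W)
  thus ?thesis by (rule conn_hub)
qed

lemma conn_F0_V1: "connected_on (ex_V - {V1}) (ex_T \<union> F0)"
proof -
  have f_R_R: "(R,R) \<in> (adj_in (ex_V - {V1}) (ex_T \<union> F0))\<^sup>*" by simp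
  have f_R_V2: "(R,V2) \<in> (adj_in (ex_V - {V1}) (ex_T \<union> F0))\<^sup>*" by (rule rtrancl_into_rtrancl[OF f_R_R]) (simp add: adj_in_def ex_V_def ex_T_def F0_def doubleton_eq_iff)
  have f_R_V3: "(R,V3) \<in> (adj_in (ex_V - {V1}) (ex_T \<union> F0))\<^sup>*" by (rule rtrancl_into_rtrancl[OF f_R_R]) (simp add: adj_in_def ex_V_def ex_T_def F0_def doubleton_eq_iff)
  have f_R_P2: "(R,P2) \<in> (adj_in (ex_V - {V1}) (ex_T \<union> F0))\<^sup>*" by (rule rtrancl_into_rtrancl[OF f_R_V2]) (simp add: adj_in_def ex_V_def ex_T_def F0_def doubleton_eq_iff)
  have f_R_Q2: "(R,Q2) \<in> (adj_in (ex_V - {V1}) (ex_T \<union> F0))\<^sup>*" by (rule rtrancl_into_rtrancl[OF f_R_V2]) (simp add: adj_in_def ex_V_def ex_T_def F0_def doubleton_eq_iff)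
  have f_R_P3: "(R,P3) \<in> (adj_in (ex_V - {V1}) (ex_T \<union> F0))\<^sup>*" by (rule rtrancl_into_rtrancl[OF f_R_V3]) (simp add: adj_in_def ex_V_def ex_T_def F0_def doubleton_eq_iff)
  have f_R_Q3: "(R,Q3) \<in> (adj_in (ex_V - {V1}) (ex_T \<union> F0))\<^sup>*" by (rule rtrancl_into_rtrancl[OF f_R_V3]) (simp add: adj_in_def ex_V_def ex_T_def F0_def doubleton_eq_iff)
  have f_R_P1: "(R,P1) \<in> (adj_in (ex_V - {V1}) (ex_T \<union> F0))\<^sup>*" by (rule rtrancl_into_rtrancl[OF f_R_P2]) (simp add: adj_in_def ex_V_def ex_T_def F0_def doubleton_eq_iff)
  have f_R_Q1: "(R,Q1) \<in> (adj_in (ex_V - {V1}) (ex_T \<union> F0))\<^sup>*" by (rule rtrancl_into_rtrancl[OF f_R_Q2]) (simp add: adj_in_def ex_V_def ex_T_def F0_def doubleton_eq_iff)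
  have W: "ex_V - {V1} = {R, V2, V3, P1, P2, P3, Q1, Q2, Q3}" by (auto simp: ex_V_def)
  have "\<forall>x\<in>{R, V2, V3, P1, P2, P3, Q1, Q2, Q3}. (R,x) \<in> (adj_in (ex_V - {V1}) (ex_T \<union> F0))\<^sup>*" using f_R_R f_R_V2 f_R_V3 f_R_P2 f_R_Q2 f_R_P3 f_R_Q3 f_R_P1 f_R_Q1 by simp
  hence "\<forall>x\<in>ex_V - {V1}. (R,x) \<in> (adj_in (ex_V - {V1}) (ex_T \<union> F0))\<^sup>*" by (simp only: W)
  thus ?thesis by (rule conn_hub)
qed

lemma conn_F0_V2: "connected_on (ex_V - {V2}) (ex_T \<union> F0)"
proof -
  have f_R_R: "(R,R) \<in> (adj_in (ex_V - {V2}) (ex_T \<union> F0))\<^sup>*" by simp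
  have f_R_V1: "(R,V1) \<in> (adj_in (ex_V - {V2}) (ex_T \<union> F0))\<^sup>*" by (rule rtrancl_into_rtrancl[OF f_R_R]) (simp add: adj_in_def ex_V_def ex_T_def F0_def doubleton_eq_iff)
  have f_R_V3: "(R,V3) \<in> (adj_in (ex_V - {V2}) (ex_T \<union> F0))\<^sup>*" by (rule rtrancl_into_rtrancl[OF f_R_R]) (simp add: adj_in_def ex_V_def ex_T_def F0_def doubleton_eq_iff)
  have f_R_P1: "(R,P1) \<in> (adj_in (ex_V - {V2}) (ex_T \<union> F0))\<^sup>*" by (rule rtrancl_into_rtrancl[OF f_R_V1]) (simp add: adj_in_def ex_V_def ex_T_def F0_def doubleton_eq_iff)
  have f_R_Q1: "(R,Q1) \<in> (adj_in (ex_V - {V2}) (ex_T \<union> F0))\<^sup>*" by (rule rtrancl_into_rtrancl[OF f_R_V1]) (simp add: adj_in_def ex_V_def ex_T_def F0_def doubleton_eq_iff)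
  have f_R_P3: "(R,P3) \<in> (adj_in (ex_V - {V2}) (ex_T \<union> F0))\<^sup>*" by (rule rtrancl_into_rtrancl[OF f_R_V3]) (simp add: adj_in_def ex_V_def ex_T_def F0_def doubleton_eq_iff)
  have f_R_Q3: "(R,Q3) \<in> (adj_in (ex_V - {V2}) (ex_T \<union> F0))\<^sup>*" by (rule rtrancl_into_rtrancl[OF f_R_V3]) (simp add: adj_in_def ex_V_def ex_T_def F0_def doubleton_eq_iff)
  have f_R_P2: "(R,P2) \<in> (adj_in (ex_V - {V2}) (ex_T \<union> F0))\<^sup>*" by (rule rtrancl_into_rtrancl[OF f_R_P1]) (simp add: adj_in_def ex_V_def ex_T_def F0_def doubleton_eq_iff)
  have f_R_Q2: "(R,Q2) \<in> (adj_in (ex_V - {V2}) (ex_T \<union> F0))\<^sup>*" by (rule rtrancl_into_rtrancl[OF f_R_Q1]) (simp add: adj_in_def ex_V_def ex_T_def F0_def doubleton_eq_iff)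
  have W: "ex_V - {V2} = {R, V1, V3, P1, P2, P3, Q1, Q2, Q3}" by (auto simp: ex_V_def)
  have "\<forall>x\<in>{R, V1, V3, P1, P2, P3, Q1, Q2, Q3}. (R,x) \<in> (adj_in (ex_V - {V2}) (ex_T \<union> F0))\<^sup>*" using f_R_R f_R_V1 f_R_V3 f_R_P1 f_R_Q1 f_R_P3 f_R_Q3 f_R_P2 f_R_Q2 by simp
  hence "\<forall>x\<in>ex_V - {V2}. (R,x) \<in> (adj_in (ex_V - {V2}) (ex_T \<union> F0))\<^sup>*" by (simp only: W)
  thus ?thesis by (rule conn_hub)
qed

lemma conn_F0_V3: "connected_on (ex_V - {V3}) (ex_T \<union> F0)"
proof -
  have f_R_R: "(R,R) \<in> (adj_in (ex_V - {V3}) (ex_T \<union> F0))\<^sup>*" by simp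
  have f_R_V1: "(R,V1) \<in> (adj_in (ex_V - {V3}) (ex_T \<union> F0))\<^sup>*" by (rule rtrancl_into_rtrancl[OF f_R_R]) (simp add: adj_in_def ex_V_def ex_T_def F0_def doubleton_eq_iff)
  have f_R_V2: "(R,V2) \<in> (adj_in (ex_V - {V3}) (ex_T \<union> F0))\<^sup>*" by (rule rtrancl_into_rtrancl[OF f_R_R]) (simp add: adj_in_def ex_V_def ex_T_def F0_def doubleton_eq_iff)
  have f_R_P1: "(R,P1) \<in> (adj_in (ex_V - {V3}) (ex_T \<union> F0))\<^sup>*" by (rule rtrancl_into_rtrancl[OF f_R_V1]) (simp add: adj_in_def ex_V_def ex_T_def F0_def doubleton_eq_iff)
  have f_R_Q1: "(R,Q1) \<in> (adj_in (ex_V - {V3}) (ex_T \<union> F0))\<^sup>*" by (rule rtrancl_into_rtrancl[OF f_R_V1]) (simp add: adj_in_def ex_V_def ex_T_def F0_def doubleton_eq_iff)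
  have f_R_P2: "(R,P2) \<in> (adj_in (ex_V - {V3}) (ex_T \<union> F0))\<^sup>*" by (rule rtrancl_into_rtrancl[OF f_R_V2]) (simp add: adj_in_def ex_V_def ex_T_def F0_def doubleton_eq_iff)
  have f_R_Q2: "(R,Q2) \<in> (adj_in (ex_V - {V3}) (ex_T \<union> F0))\<^sup>*" by (rule rtrancl_into_rtrancl[OF f_R_V2]) (simp add: adj_in_def ex_V_def ex_T_def F0_def doubleton_eq_iff)
  have f_R_P3: "(R,P3) \<in> (adj_in (ex_V - {V3}) (ex_T \<union> F0))\<^sup>*" by (rule rtrancl_into_rtrancl[OF f_R_P2]) (simp add: adj_in_def ex_V_def ex_T_def F0_def doubleton_eq_iff)
  have f_R_Q3: "(R,Q3) \<in> (adj_in (ex_V - {V3}) (ex_T \<union> F0))\<^sup>*" by (rule rtrancl_into_rtrancl[OF f_R_Q2]) (simp add: adj_in_def ex_V_def ex_T_def F0_def doubleton_eq_iff)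
  have W: "ex_V - {V3} = {R, V1, V2, P1, P2, P3, Q1, Q2, Q3}" by (auto simp: ex_V_def)
  have "\<forall>x\<in>{R, V1, V2, P1, P2, P3, Q1, Q2, Q3}. (R,x) \<in> (adj_in (ex_V - {V3}) (ex_T \<union> F0))\<^sup>*" using f_R_R f_R_V1 f_R_V2 f_R_P1 f_R_Q1 f_R_P2 f_R_Q2 f_R_P3 f_R_Q3 by simp
  hence "\<forall>x\<in>ex_V - {V3}. (R,x) \<in> (adj_in (ex_V - {V3}) (ex_T \<union> F0))\<^sup>*" by (simp only: W)
  thus ?thesis by (rule conn_hub)
qed

lemma conn_F0_P1: "connected_on (ex_V - {P1}) (ex_T \<union> F0)"
proof -
  have f_R_R: "(R,R) \<in> (adj_in (ex_V - {P1}) (ex_T \<union> F0))\<^sup>*" by simp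
  have f_R_V1: "(R,V1) \<in> (adj_in (ex_V - {P1}) (ex_T \<union> F0))\<^sup>*" by (rule rtrancl_into_rtrancl[OF f_R_R]) (simp add: adj_in_def ex_V_def ex_T_def F0_def doubleton_eq_iff)
  have f_R_V2: "(R,V2) \<in> (adj_in (ex_V - {P1}) (ex_T \<union> F0))\<^sup>*" by (rule rtrancl_into_rtrancl[OF f_R_R]) (simp add: adj_in_def ex_V_def ex_T_def F0_def doubleton_eq_iff)
  have f_R_V3: "(R,V3) \<in> (adj_in (ex_V - {P1}) (ex_T \<union> F0))\<^sup>*" by (rule rtrancl_into_rtrancl[OF f_R_R]) (simp add: adj_in_def ex_V_def ex_T_def F0_def doubleton_eq_iff)
  have f_R_Q1: "(R,Q1) \<in> (adj_in (ex_V - {P1}) (ex_T \<union> F0))\<^sup>*" by (rule rtrancl_into_rtrancl[OF f_R_V1]) (simp add: adj_in_def ex_V_def ex_T_def F0_def doubleton_eq_iff)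
  have f_R_P2: "(R,P2) \<in> (adj_in (ex_V - {P1}) (ex_T \<union> F0))\<^sup>*" by (rule rtrancl_into_rtrancl[OF f_R_V2]) (simp add: adj_in_def ex_V_def ex_T_def F0_def doubleton_eq_iff)
  have f_R_Q2: "(R,Q2) \<in> (adj_in (ex_V - {P1}) (ex_T \<union> F0))\<^sup>*" by (rule rtrancl_into_rtrancl[OF f_R_V2]) (simp add: adj_in_def ex_V_def ex_T_def F0_def doubleton_eq_iff)
  have f_R_P3: "(R,P3) \<in> (adj_in (ex_V - {P1}) (ex_T \<union> F0))\<^sup>*" by (rule rtrancl_into_rtrancl[OF f_R_V3]) (simp add: adj_in_def ex_V_def ex_T_def F0_def doubleton_eq_iff)
  have f_R_Q3: "(R,Q3) \<in> (adj_in (ex_V - {P1}) (ex_T \<union> F0))\<^sup>*" by (rule rtrancl_into_rtrancl[OF f_R_V3]) (simp add: adj_in_def ex_V_def ex_T_def F0_def doubleton_eq_iff)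
  have W: "ex_V - {P1} = {R, V1, V2, V3, P2, P3, Q1, Q2, Q3}" by (auto simp: ex_V_def)
  have "\<forall>x\<in>{R, V1, V2, V3, P2, P3, Q1, Q2, Q3}. (R,x) \<in> (adj_in (ex_V - {P1}) (ex_T \<union> F0))\<^sup>*" using f_R_R f_R_V1 f_R_V2 f_R_V3 f_R_Q1 f_R_P2 f_R_Q2 f_R_P3 f_R_Q3 by simp
  hence "\<forall>x\<in>ex_V - {P1}. (R,x) \<in> (adj_in (ex_V - {P1}) (ex_T \<union> F0))\<^sup>*" by (simp only: W)
  thus ?thesis by (rule conn_hub)
qed

lemma conn_F0_P2: "connected_on (ex_V - {P2}) (ex_T \<union> F0)"
proof -
  have f_R_R: "(R,R) \<in> (adj_in (ex_V - {P2}) (ex_T \<union> F0))\<^sup>*" by simp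
  have f_R_V1: "(R,V1) \<in> (adj_in (ex_V - {P2}) (ex_T \<union> F0))\<^sup>*" by (rule rtrancl_into_rtrancl[OF f_R_R]) (simp add: adj_in_def ex_V_def ex_T_def F0_def doubleton_eq_iff)
  have f_R_V2: "(R,V2) \<in> (adj_in (ex_V - {P2}) (ex_T \<union> F0))\<^sup>*" by (rule rtrancl_into_rtrancl[OF f_R_R]) (simp add: adj_in_def ex_V_def ex_T_def F0_def doubleton_eq_iff)
  have f_R_V3: "(R,V3) \<in> (adj_in (ex_V - {P2}) (ex_T \<union> F0))\<^sup>*" by (rule rtrancl_into_rtrancl[OF f_R_R]) (simp add: adj_in_def ex_V_def ex_T_def F0_def doubleton_eq_iff)
  have f_R_P1: "(R,P1) \<in> (adj_in (ex_V - {P2}) (ex_T \<union> F0))\<^sup>*" by (rule rtrancl_into_rtrancl[OF f_R_V1]) (simp add: adj_in_def ex_V_def ex_T_def F0_def doubleton_eq_iff)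
  have f_R_Q1: "(R,Q1) \<in> (adj_in (ex_V - {P2}) (ex_T \<union> F0))\<^sup>*" by (rule rtrancl_into_rtrancl[OF f_R_V1]) (simp add: adj_in_def ex_V_def ex_T_def F0_def doubleton_eq_iff)
  have f_R_Q2: "(R,Q2) \<in> (adj_in (ex_V - {P2}) (ex_T \<union> F0))\<^sup>*" by (rule rtrancl_into_rtrancl[OF f_R_V2]) (simp add: adj_in_def ex_V_def ex_T_def F0_def doubleton_eq_iff)
  have f_R_P3: "(R,P3) \<in> (adj_in (ex_V - {P2}) (ex_T \<union> F0))\<^sup>*" by (rule rtrancl_into_rtrancl[OF f_R_V3]) (simp add: adj_in_def ex_V_def ex_T_def F0_def doubleton_eq_iff)
  have f_R_Q3: "(R,Q3) \<in> (adj_in (ex_V - {P2}) (ex_T \<union> F0))\<^sup>*" by (rule rtrancl_into_rtrancl[OF f_R_V3]) (simp add: adj_in_def ex_V_def ex_T_def F0_def doubleton_eq_iff)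
  have W: "ex_V - {P2} = {R, V1, V2, V3, P1, P3, Q1, Q2, Q3}" by (auto simp: ex_V_def)
  have "\<forall>x\<in>{R, V1, V2, V3, P1, P3, Q1, Q2, Q3}. (R,x) \<in> (adj_in (ex_V - {P2}) (ex_T \<union> F0))\<^sup>*" using f_R_R f_R_V1 f_R_V2 f_R_V3 f_R_P1 f_R_Q1 f_R_Q2 f_R_P3 f_R_Q3 by simp
  hence "\<forall>x\<in>ex_V - {P2}. (R,x) \<in> (adj_in (ex_V - {P2}) (ex_T \<union> F0))\<^sup>*" by (simp only: W)
  thus ?thesis by (rule conn_hub)
qed

lemma conn_F0_P3: "connected_on (ex_V - {P3}) (ex_T \<union> F0)"
proof -
  have f_R_R: "(R,R) \<in> (adj_in (ex_V - {P3}) (ex_T \<union> F0))\<^sup>*" by simp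
  have f_R_V1: "(R,V1) \<in> (adj_in (ex_V - {P3}) (ex_T \<union> F0))\<^sup>*" by (rule rtrancl_into_rtrancl[OF f_R_R]) (simp add: adj_in_def ex_V_def ex_T_def F0_def doubleton_eq_iff)
  have f_R_V2: "(R,V2) \<in> (adj_in (ex_V - {P3}) (ex_T \<union> F0))\<^sup>*" by (rule rtrancl_into_rtrancl[OF f_R_R]) (simp add: adj_in_def ex_V_def ex_T_def F0_def doubleton_eq_iff)
  have f_R_V3: "(R,V3) \<in> (adj_in (ex_V - {P3}) (ex_T \<union> F0))\<^sup>*" by (rule rtrancl_into_rtrancl[OF f_R_R]) (simp add: adj_in_def ex_V_def ex_T_def F0_def doubleton_eq_iff)
  have f_R_P1: "(R,P1) \<in> (adj_in (ex_V - {P3}) (ex_T \<union> F0))\<^sup>*" by (rule rtrancl_into_rtrancl[OF f_R_V1]) (simp add: adj_in_def ex_V_def ex_T_def F0_def doubleton_eq_iff)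
  have f_R_Q1: "(R,Q1) \<in> (adj_in (ex_V - {P3}) (ex_T \<union> F0))\<^sup>*" by (rule rtrancl_into_rtrancl[OF f_R_V1]) (simp add: adj_in_def ex_V_def ex_T_def F0_def doubleton_eq_iff)
  have f_R_P2: "(R,P2) \<in> (adj_in (ex_V - {P3}) (ex_T \<union> F0))\<^sup>*" by (rule rtrancl_into_rtrancl[OF f_R_V2]) (simp add: adj_in_def ex_V_def ex_T_def F0_def doubleton_eq_iff)
  have f_R_Q2: "(R,Q2) \<in> (adj_in (ex_V - {P3}) (ex_T \<union> F0))\<^sup>*" by (rule rtrancl_into_rtrancl[OF f_R_V2]) (simp add: adj_in_def ex_V_def ex_T_def F0_def doubleton_eq_iff)
  have f_R_Q3: "(R,Q3) \<in> (adj_in (ex_V - {P3}) (ex_T \<union> F0))\<^sup>*" by (rule rtrancl_into_rtrancl[OF f_R_V3]) (simp add: adj_in_def ex_V_def ex_T_def F0_def doubleton_eq_iff)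
  have W: "ex_V - {P3} = {R, V1, V2, V3, P1, P2, Q1, Q2, Q3}" by (auto simp: ex_V_def)
  have "\<forall>x\<in>{R, V1, V2, V3, P1, P2, Q1, Q2, Q3}. (R,x) \<in> (adj_in (ex_V - {P3}) (ex_T \<union> F0))\<^sup>*" using f_R_R f_R_V1 f_R_V2 f_R_V3 f_R_P1 f_R_Q1 f_R_P2 f_R_Q2 f_R_Q3 by simp
  hence "\<forall>x\<in>ex_V - {P3}. (R,x) \<in> (adj_in (ex_V - {P3}) (ex_T \<union> F0))\<^sup>*" by (simp only: W)
  thus ?thesis by (rule conn_hub)
qed

lemma conn_F0_Q1: "connected_on (ex_V - {Q1}) (ex_T \<union> F0)"
proof -
  have f_R_R: "(R,R) \<in> (adj_in (ex_V - {Q1}) (ex_T \<union> F0))\<^sup>*" by simp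
  have f_R_V1: "(R,V1) \<in> (adj_in (ex_V - {Q1}) (ex_T \<union> F0))\<^sup>*" by (rule rtrancl_into_rtrancl[OF f_R_R]) (simp add: adj_in_def ex_V_def ex_T_def F0_def doubleton_eq_iff)
  have f_R_V2: "(R,V2) \<in> (adj_in (ex_V - {Q1}) (ex_T \<union> F0))\<^sup>*" by (rule rtrancl_into_rtrancl[OF f_R_R]) (simp add: adj_in_def ex_V_def ex_T_def F0_def doubleton_eq_iff)
  have f_R_V3: "(R,V3) \<in> (adj_in (ex_V - {Q1}) (ex_T \<union> F0))\<^sup>*" by (rule rtrancl_into_rtrancl[OF f_R_R]) (simp add: adj_in_def ex_V_def ex_T_def F0_def doubleton_eq_iff)
  have f_R_P1: "(R,P1) \<in> (adj_in (ex_V - {Q1}) (ex_T \<union> F0))\<^sup>*" by (rule rtrancl_into_rtrancl[OF f_R_V1]) (simp add: adj_in_def ex_V_def ex_T_def F0_def doubleton_eq_iff)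
  have f_R_P2: "(R,P2) \<in> (adj_in (ex_V - {Q1}) (ex_T \<union> F0))\<^sup>*" by (rule rtrancl_into_rtrancl[OF f_R_V2]) (simp add: adj_in_def ex_V_def ex_T_def F0_def doubleton_eq_iff)
  have f_R_Q2: "(R,Q2) \<in> (adj_in (ex_V - {Q1}) (ex_T \<union> F0))\<^sup>*" by (rule rtrancl_into_rtrancl[OF f_R_V2]) (simp add: adj_in_def ex_V_def ex_T_def F0_def doubleton_eq_iff)
  have f_R_P3: "(R,P3) \<in> (adj_in (ex_V - {Q1}) (ex_T \<union> F0))\<^sup>*" by (rule rtrancl_into_rtrancl[OF f_R_V3]) (simp add: adj_in_def ex_V_def ex_T_def F0_def doubleton_eq_iff)
  have f_R_Q3: "(R,Q3) \<in> (adj_in (ex_V - {Q1}) (ex_T \<union> F0))\<^sup>*" by (rule rtrancl_into_rtrancl[OF f_R_V3]) (simp add: adj_in_def ex_V_def ex_T_def F0_def doubleton_eq_iff)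
  have W: "ex_V - {Q1} = {R, V1, V2, V3, P1, P2, P3, Q2, Q3}" by (auto simp: ex_V_def)
  have "\<forall>x\<in>{R, V1, V2, V3, P1, P2, P3, Q2, Q3}. (R,x) \<in> (adj_in (ex_V - {Q1}) (ex_T \<union> F0))\<^sup>*" using f_R_R f_R_V1 f_R_V2 f_R_V3 f_R_P1 f_R_P2 f_R_Q2 f_R_P3 f_R_Q3 by simp
  hence "\<forall>x\<in>ex_V - {Q1}. (R,x) \<in> (adj_in (ex_V - {Q1}) (ex_T \<union> F0))\<^sup>*" by (simp only: W)
  thus ?thesis by (rule conn_hub)
qed

lemma conn_F0_Q2: "connected_on (ex_V - {Q2}) (ex_T \<union> F0)"
proof -
  have f_R_R: "(R,R) \<in> (adj_in (ex_V - {Q2}) (ex_T \<union> F0))\<^sup>*" by simp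
  have f_R_V1: "(R,V1) \<in> (adj_in (ex_V - {Q2}) (ex_T \<union> F0))\<^sup>*" by (rule rtrancl_into_rtrancl[OF f_R_R]) (simp add: adj_in_def ex_V_def ex_T_def F0_def doubleton_eq_iff)
  have f_R_V2: "(R,V2) \<in> (adj_in (ex_V - {Q2}) (ex_T \<union> F0))\<^sup>*" by (rule rtrancl_into_rtrancl[OF f_R_R]) (simp add: adj_in_def ex_V_def ex_T_def F0_def doubleton_eq_iff)
  have f_R_V3: "(R,V3) \<in> (adj_in (ex_V - {Q2}) (ex_T \<union> F0))\<^sup>*" by (rule rtrancl_into_rtrancl[OF f_R_R]) (simp add: adj_in_def ex_V_def ex_T_def F0_def doubleton_eq_iff)
  have f_R_P1: "(R,P1) \<in> (adj_in (ex_V - {Q2}) (ex_T \<union> F0))\<^sup>*" by (rule rtrancl_into_rtrancl[OF f_R_V1]) (simp add: adj_in_def ex_V_def ex_T_def F0_def doubleton_eq_iff)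
  have f_R_Q1: "(R,Q1) \<in> (adj_in (ex_V - {Q2}) (ex_T \<union> F0))\<^sup>*" by (rule rtrancl_into_rtrancl[OF f_R_V1]) (simp add: adj_in_def ex_V_def ex_T_def F0_def doubleton_eq_iff)
  have f_R_P2: "(R,P2) \<in> (adj_in (ex_V - {Q2}) (ex_T \<union> F0))\<^sup>*" by (rule rtrancl_into_rtrancl[OF f_R_V2]) (simp add: adj_in_def ex_V_def ex_T_def F0_def doubleton_eq_iff)
  have f_R_P3: "(R,P3) \<in> (adj_in (ex_V - {Q2}) (ex_T \<union> F0))\<^sup>*" by (rule rtrancl_into_rtrancl[OF f_R_V3]) (simp add: adj_in_def ex_V_def ex_T_def F0_def doubleton_eq_iff)
  have f_R_Q3: "(R,Q3) \<in> (adj_in (ex_V - {Q2}) (ex_T \<union> F0))\<^sup>*" by (rule rtrancl_into_rtrancl[OF f_R_V3]) (simp add: adj_in_def ex_V_def ex_T_def F0_def doubleton_eq_iff)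
  have W: "ex_V - {Q2} = {R, V1, V2, V3, P1, P2, P3, Q1, Q3}" by (auto simp: ex_V_def)
  have "\<forall>x\<in>{R, V1, V2, V3, P1, P2, P3, Q1, Q3}. (R,x) \<in> (adj_in (ex_V - {Q2}) (ex_T \<union> F0))\<^sup>*" using f_R_R f_R_V1 f_R_V2 f_R_V3 f_R_P1 f_R_Q1 f_R_P2 f_R_P3 f_R_Q3 by simp
  hence "\<forall>x\<in>ex_V - {Q2}. (R,x) \<in> (adj_in (ex_V - {Q2}) (ex_T \<union> F0))\<^sup>*" by (simp only: W)
  thus ?thesis by (rule conn_hub)
qed

lemma conn_F0_Q3: "connected_on (ex_V - {Q3}) (ex_T \<union> F0)"
proof -
  have f_R_R: "(R,R) \<in> (adj_in (ex_V - {Q3}) (ex_T \<union> F0))\<^sup>*" by simp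
  have f_R_V1: "(R,V1) \<in> (adj_in (ex_V - {Q3}) (ex_T \<union> F0))\<^sup>*" by (rule rtrancl_into_rtrancl[OF f_R_R]) (simp add: adj_in_def ex_V_def ex_T_def F0_def doubleton_eq_iff)
  have f_R_V2: "(R,V2) \<in> (adj_in (ex_V - {Q3}) (ex_T \<union> F0))\<^sup>*" by (rule rtrancl_into_rtrancl[OF f_R_R]) (simp add: adj_in_def ex_V_def ex_T_def F0_def doubleton_eq_iff)
  have f_R_V3: "(R,V3) \<in> (adj_in (ex_V - {Q3}) (ex_T \<union> F0))\<^sup>*" by (rule rtrancl_into_rtrancl[OF f_R_R]) (simp add: adj_in_def ex_V_def ex_T_def F0_def doubleton_eq_iff)
  have f_R_P1: "(R,P1) \<in> (adj_in (ex_V - {Q3}) (ex_T \<union> F0))\<^sup>*" by (rule rtrancl_into_rtrancl[OF f_R_V1]) (simp add: adj_in_def ex_V_def ex_T_def F0_def doubleton_eq_iff)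
  have f_R_Q1: "(R,Q1) \<in> (adj_in (ex_V - {Q3}) (ex_T \<union> F0))\<^sup>*" by (rule rtrancl_into_rtrancl[OF f_R_V1]) (simp add: adj_in_def ex_V_def ex_T_def F0_def doubleton_eq_iff)
  have f_R_P2: "(R,P2) \<in> (adj_in (ex_V - {Q3}) (ex_T \<union> F0))\<^sup>*" by (rule rtrancl_into_rtrancl[OF f_R_V2]) (simp add: adj_in_def ex_V_def ex_T_def F0_def doubleton_eq_iff)
  have f_R_Q2: "(R,Q2) \<in> (adj_in (ex_V - {Q3}) (ex_T \<union> F0))\<^sup>*" by (rule rtrancl_into_rtrancl[OF f_R_V2]) (simp add: adj_in_def ex_V_def ex_T_def F0_def doubleton_eq_iff)
  have f_R_P3: "(R,P3) \<in> (adj_in (ex_V - {Q3}) (ex_T \<union> F0))\<^sup>*" by (rule rtrancl_into_rtrancl[OF f_R_V3]) (simp add: adj_in_def ex_V_def ex_T_def F0_def doubleton_eq_iff)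
  have W: "ex_V - {Q3} = {R, V1, V2, V3, P1, P2, P3, Q1, Q2}" by (auto simp: ex_V_def)
  have "\<forall>x\<in>{R, V1, V2, V3, P1, P2, P3, Q1, Q2}. (R,x) \<in> (adj_in (ex_V - {Q3}) (ex_T \<union> F0))\<^sup>*" using f_R_R f_R_V1 f_R_V2 f_R_V3 f_R_P1 f_R_Q1 f_R_P2 f_R_Q2 f_R_P3 by simp
  hence "\<forall>x\<in>ex_V - {Q3}. (R,x) \<in> (adj_in (ex_V - {Q3}) (ex_T \<union> F0))\<^sup>*" by (simp only: W)
  thus ?thesis by (rule conn_hub)
qed

lemma lp_R:
  assumes P: "P \<in> Pi_u ex_V ex_T R"
  shows "(\<Sum>l\<in>{l\<in>ex_L. crosses R P l}. x_hat l) \<ge> real (card P) - 1"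
proof -
  have g_V1_V1: "(V1,V1) \<in> (adj_in (ex_V - {R}) (ex_T))\<^sup>*" by simp
  have g_V1_P1: "(V1,P1) \<in> (adj_in (ex_V - {R}) (ex_T))\<^sup>*" by (rule rtrancl_into_rtrancl[OF g_V1_V1]) (simp add: adj_in_def ex_V_def ex_T_def doubleton_eq_iff)
  have g_V1_Q1: "(V1,Q1) \<in> (adj_in (ex_V - {R}) (ex_T))\<^sup>*" by (rule rtrancl_into_rtrancl[OF g_V1_V1]) (simp add: adj_in_def ex_V_def ex_T_def doubleton_eq_iff)
  have g_V2_V2: "(V2,V2) \<in> (adj_in (ex_V - {R}) (ex_T))\<^sup>*" by simp
  have g_V2_P2: "(V2,P2) \<in> (adj_in (ex_V - {R}) (ex_T))\<^sup>*" by (rule rtrancl_into_rtrancl[OF g_V2_V2]) (simp add: adj_in_def ex_V_def ex_T_def doubleton_eq_iff)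
  have g_V2_Q2: "(V2,Q2) \<in> (adj_in (ex_V - {R}) (ex_T))\<^sup>*" by (rule rtrancl_into_rtrancl[OF g_V2_V2]) (simp add: adj_in_def ex_V_def ex_T_def doubleton_eq_iff)
  have g_V3_V3: "(V3,V3) \<in> (adj_in (ex_V - {R}) (ex_T))\<^sup>*" by simp
  have g_V3_P3: "(V3,P3) \<in> (adj_in (ex_V - {R}) (ex_T))\<^sup>*" by (rule rtrancl_into_rtrancl[OF g_V3_V3]) (simp add: adj_in_def ex_V_def ex_T_def doubleton_eq_iff)
  have g_V3_Q3: "(V3,Q3) \<in> (adj_in (ex_V - {R}) (ex_T))\<^sup>*" by (rule rtrancl_into_rtrancl[OF g_V3_V3]) (simp add: adj_in_def ex_V_def ex_T_def doubleton_eq_iff)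
  define c where "c = (\<lambda>x. case x of V2 \<Rightarrow> V2 | P2 \<Rightarrow> V2 | Q2 \<Rightarrow> V2 | V3 \<Rightarrow> V3 | P3 \<Rightarrow> V3 | Q3 \<Rightarrow> V3 | _ \<Rightarrow> V1)"
  have W: "ex_V - {R} = {V1, V2, V3, P1, P2, P3, Q1, Q2, Q3}" by (auto simp: ex_V_def)
  have "\<forall>x\<in>{V1, V2, V3, P1, P2, P3, Q1, Q2, Q3}. c x \<in> {V1, V2, V3} \<and> (c x, x) \<in> (adj_in (ex_V - {R}) (ex_T))\<^sup>*" using g_V1_V1 g_V1_P1 g_V1_Q1 g_V2_V2 g_V2_P2 g_V2_Q2 g_V3_V3 g_V3_P3 g_V3_Q3 by (simp add: c_def)
  hence c: "\<forall>x\<in>ex_V - {R}. c x \<in> {V1, V2, V3} \<and> (c x, x) \<in> (adj_in (ex_V - {R}) (ex_T))\<^sup>*" by (simp only: W)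
  have a: "V1 \<in> ex_V - {R}" "V2 \<in> ex_V - {R}" "V3 \<in> ex_V - {R}" by (simp_all add: ex_V_def)
  obtain B where PB: "P = {B V1, B V2, B V3}" and cr: "\<forall>x\<in>ex_V - {R}. \<forall>y\<in>ex_V - {R}. crosses R P {x,y} \<longleftrightarrow> B (c x) \<noteq> B (c y)"
    using part_blocks[OF P c a] by blast
  have cr2: "crosses R P {x,y} \<longleftrightarrow> B (c x) \<noteq> B (c y)" if "x \<in> ex_V - {R}" "y \<in> ex_V - {R}" for x y using cr that by blast
  have "(\<Sum>l\<in>{l\<in>ex_L. crosses R P l}. x_hat l) = (\<Sum>l\<in>ex_L. if crosses R P l then 1/2 else 0)"
    unfolding sum.inter_filter[OF finite_ex_L] by (rule sum.cong) (auto simp: x_hat_def)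
  also have "\<dots> \<ge> real (card {B V1, B V2, B V3}) - 1"
    by (cases "B V1 = B V2"; cases "B V1 = B V3"; cases "B V2 = B V3") (simp_all add: ex_L_def cr2 ex_V_def c_def doubleton_eq_iff card_insert_if)
  finally show ?thesis unfolding PB .
qed

lemma lp_V1:
  assumes P: "P \<in> Pi_u ex_V ex_T V1"
  shows "(\<Sum>l\<in>{l\<in>ex_L. crosses V1 P l}. x_hat l) \<ge> real (card P) - 1"
proof -
  have g_P1_P1: "(P1,P1) \<in> (adj_in (ex_V - {V1}) (ex_T))\<^sup>*" by simp
  have g_Q1_Q1: "(Q1,Q1) \<in> (adj_in (ex_V - {V1}) (ex_T))\<^sup>*" by simp
  have g_R_R: "(R,R) \<in> (adj_in (ex_V - {V1}) (ex_T))\<^sup>*" by simp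
  have g_R_V2: "(R,V2) \<in> (adj_in (ex_V - {V1}) (ex_T))\<^sup>*" by (rule rtrancl_into_rtrancl[OF g_R_R]) (simp add: adj_in_def ex_V_def ex_T_def doubleton_eq_iff)
  have g_R_V3: "(R,V3) \<in> (adj_in (ex_V - {V1}) (ex_T))\<^sup>*" by (rule rtrancl_into_rtrancl[OF g_R_R]) (simp add: adj_in_def ex_V_def ex_T_def doubleton_eq_iff)
  have g_R_P2: "(R,P2) \<in> (adj_in (ex_V - {V1}) (ex_T))\<^sup>*" by (rule rtrancl_into_rtrancl[OF g_R_V2]) (simp add: adj_in_def ex_V_def ex_T_def doubleton_eq_iff)
  have g_R_Q2: "(R,Q2) \<in> (adj_in (ex_V - {V1}) (ex_T))\<^sup>*" by (rule rtrancl_into_rtrancl[OF g_R_V2]) (simp add: adj_in_def ex_V_def ex_T_def doubleton_eq_iff)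
  have g_R_P3: "(R,P3) \<in> (adj_in (ex_V - {V1}) (ex_T))\<^sup>*" by (rule rtrancl_into_rtrancl[OF g_R_V3]) (simp add: adj_in_def ex_V_def ex_T_def doubleton_eq_iff)
  have g_R_Q3: "(R,Q3) \<in> (adj_in (ex_V - {V1}) (ex_T))\<^sup>*" by (rule rtrancl_into_rtrancl[OF g_R_V3]) (simp add: adj_in_def ex_V_def ex_T_def doubleton_eq_iff)
  define c where "c = (\<lambda>x. case x of P1 \<Rightarrow> P1 | Q1 \<Rightarrow> Q1 | _ \<Rightarrow> R)"
  have W: "ex_V - {V1} = {R, V2, V3, P1, P2, P3, Q1, Q2, Q3}" by (auto simp: ex_V_def)
  have "\<forall>x\<in>{R, V2, V3, P1, P2, P3, Q1, Q2, Q3}. c x \<in> {P1, Q1, R} \<and> (c x, x) \<in> (adj_in (ex_V - {V1}) (ex_T))\<^sup>*" using g_P1_P1 g_Q1_Q1 g_R_R g_R_V2 g_R_V3 g_R_P2 g_R_Q2 g_R_P3 g_R_Q3 by (simp add: c_def)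
  hence c: "\<forall>x\<in>ex_V - {V1}. c x \<in> {P1, Q1, R} \<and> (c x, x) \<in> (adj_in (ex_V - {V1}) (ex_T))\<^sup>*" by (simp only: W)
  have a: "P1 \<in> ex_V - {V1}" "Q1 \<in> ex_V - {V1}" "R \<in> ex_V - {V1}" by (simp_all add: ex_V_def)
  obtain B where PB: "P = {B P1, B Q1, B R}" and cr: "\<forall>x\<in>ex_V - {V1}. \<forall>y\<in>ex_V - {V1}. crosses V1 P {x,y} \<longleftrightarrow> B (c x) \<noteq> B (c y)"
    using part_blocks[OF P c a] by blast
  have cr2: "crosses V1 P {x,y} \<longleftrightarrow> B (c x) \<noteq> B (c y)" if "x \<in> ex_V - {V1}" "y \<in> ex_V - {V1}" for x y using cr that by blast
  have "(\<Sum>l\<in>{l\<in>ex_L. crosses V1 P l}. x_hat l) = (\<Sum>l\<in>ex_L. if crosses V1 P l then 1/2 else 0)"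
    unfolding sum.inter_filter[OF finite_ex_L] by (rule sum.cong) (auto simp: x_hat_def)
  also have "\<dots> \<ge> real (card {B P1, B Q1, B R}) - 1"
    by (cases "B P1 = B Q1"; cases "B P1 = B R"; cases "B Q1 = B R") (simp_all add: ex_L_def cr2 ex_V_def c_def doubleton_eq_iff card_insert_if)
  finally show ?thesis unfolding PB .
qed

lemma lp_V2:
  assumes P: "P \<in> Pi_u ex_V ex_T V2"
  shows "(\<Sum>l\<in>{l\<in>ex_L. crosses V2 P l}. x_hat l) \<ge> real (card P) - 1"
proof -
  have g_P2_P2: "(P2,P2) \<in> (adj_in (ex_V - {V2}) (ex_T))\<^sup>*" by simp
  have g_Q2_Q2: "(Q2,Q2) \<in> (adj_in (ex_V - {V2}) (ex_T))\<^sup>*" by simp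
  have g_R_R: "(R,R) \<in> (adj_in (ex_V - {V2}) (ex_T))\<^sup>*" by simp
  have g_R_V1: "(R,V1) \<in> (adj_in (ex_V - {V2}) (ex_T))\<^sup>*" by (rule rtrancl_into_rtrancl[OF g_R_R]) (simp add: adj_in_def ex_V_def ex_T_def doubleton_eq_iff)
  have g_R_V3: "(R,V3) \<in> (adj_in (ex_V - {V2}) (ex_T))\<^sup>*" by (rule rtrancl_into_rtrancl[OF g_R_R]) (simp add: adj_in_def ex_V_def ex_T_def doubleton_eq_iff)
  have g_R_P1: "(R,P1) \<in> (adj_in (ex_V - {V2}) (ex_T))\<^sup>*" by (rule rtrancl_into_rtrancl[OF g_R_V1]) (simp add: adj_in_def ex_V_def ex_T_def doubleton_eq_iff)
  have g_R_Q1: "(R,Q1) \<in> (adj_in (ex_V - {V2}) (ex_T))\<^sup>*" by (rule rtrancl_into_rtrancl[OF g_R_V1]) (simp add: adj_in_def ex_V_def ex_T_def doubleton_eq_iff)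
  have g_R_P3: "(R,P3) \<in> (adj_in (ex_V - {V2}) (ex_T))\<^sup>*" by (rule rtrancl_into_rtrancl[OF g_R_V3]) (simp add: adj_in_def ex_V_def ex_T_def doubleton_eq_iff)
  have g_R_Q3: "(R,Q3) \<in> (adj_in (ex_V - {V2}) (ex_T))\<^sup>*" by (rule rtrancl_into_rtrancl[OF g_R_V3]) (simp add: adj_in_def ex_V_def ex_T_def doubleton_eq_iff)
  define c where "c = (\<lambda>x. case x of P2 \<Rightarrow> P2 | Q2 \<Rightarrow> Q2 | _ \<Rightarrow> R)"
  have W: "ex_V - {V2} = {R, V1, V3, P1, P2, P3, Q1, Q2, Q3}" by (auto simp: ex_V_def)
  have "\<forall>x\<in>{R, V1, V3, P1, P2, P3, Q1, Q2, Q3}. c x \<in> {P2, Q2, R} \<and> (c x, x) \<in> (adj_in (ex_V - {V2}) (ex_T))\<^sup>*" using g_P2_P2 g_Q2_Q2 g_R_R g_R_V1 g_R_V3 g_R_P1 g_R_Q1 g_R_P3 g_R_Q3 by (simp add: c_def)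
  hence c: "\<forall>x\<in>ex_V - {V2}. c x \<in> {P2, Q2, R} \<and> (c x, x) \<in> (adj_in (ex_V - {V2}) (ex_T))\<^sup>*" by (simp only: W)
  have a: "P2 \<in> ex_V - {V2}" "Q2 \<in> ex_V - {V2}" "R \<in> ex_V - {V2}" by (simp_all add: ex_V_def)
  obtain B where PB: "P = {B P2, B Q2, B R}" and cr: "\<forall>x\<in>ex_V - {V2}. \<forall>y\<in>ex_V - {V2}. crosses V2 P {x,y} \<longleftrightarrow> B (c x) \<noteq> B (c y)"
    using part_blocks[OF P c a] by blast
  have cr2: "crosses V2 P {x,y} \<longleftrightarrow> B (c x) \<noteq> B (c y)" if "x \<in> ex_V - {V2}" "y \<in> ex_V - {V2}" for x y using cr that by blast
  have "(\<Sum>l\<in>{l\<in>ex_L. crosses V2 P l}. x_hat l) = (\<Sum>l\<in>ex_L. if crosses V2 P l then 1/2 else 0)"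
    unfolding sum.inter_filter[OF finite_ex_L] by (rule sum.cong) (auto simp: x_hat_def)
  also have "\<dots> \<ge> real (card {B P2, B Q2, B R}) - 1"
    by (cases "B P2 = B Q2"; cases "B P2 = B R"; cases "B Q2 = B R") (simp_all add: ex_L_def cr2 ex_V_def c_def doubleton_eq_iff card_insert_if)
  finally show ?thesis unfolding PB .
qed

lemma lp_V3:
  assumes P: "P \<in> Pi_u ex_V ex_T V3"
  shows "(\<Sum>l\<in>{l\<in>ex_L. crosses V3 P l}. x_hat l) \<ge> real (card P) - 1"
proof -
  have g_P3_P3: "(P3,P3) \<in> (adj_in (ex_V - {V3}) (ex_T))\<^sup>*" by simp
  have g_Q3_Q3: "(Q3,Q3) \<in> (adj_in (ex_V - {V3}) (ex_T))\<^sup>*" by simp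
  have g_R_R: "(R,R) \<in> (adj_in (ex_V - {V3}) (ex_T))\<^sup>*" by simp
  have g_R_V1: "(R,V1) \<in> (adj_in (ex_V - {V3}) (ex_T))\<^sup>*" by (rule rtrancl_into_rtrancl[OF g_R_R]) (simp add: adj_in_def ex_V_def ex_T_def doubleton_eq_iff)
  have g_R_V2: "(R,V2) \<in> (adj_in (ex_V - {V3}) (ex_T))\<^sup>*" by (rule rtrancl_into_rtrancl[OF g_R_R]) (simp add: adj_in_def ex_V_def ex_T_def doubleton_eq_iff)
  have g_R_P1: "(R,P1) \<in> (adj_in (ex_V - {V3}) (ex_T))\<^sup>*" by (rule rtrancl_into_rtrancl[OF g_R_V1]) (simp add: adj_in_def ex_V_def ex_T_def doubleton_eq_iff)
  have g_R_Q1: "(R,Q1) \<in> (adj_in (ex_V - {V3}) (ex_T))\<^sup>*" by (rule rtrancl_into_rtrancl[OF g_R_V1]) (simp add: adj_in_def ex_V_def ex_T_def doubleton_eq_iff)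
  have g_R_P2: "(R,P2) \<in> (adj_in (ex_V - {V3}) (ex_T))\<^sup>*" by (rule rtrancl_into_rtrancl[OF g_R_V2]) (simp add: adj_in_def ex_V_def ex_T_def doubleton_eq_iff)
  have g_R_Q2: "(R,Q2) \<in> (adj_in (ex_V - {V3}) (ex_T))\<^sup>*" by (rule rtrancl_into_rtrancl[OF g_R_V2]) (simp add: adj_in_def ex_V_def ex_T_def doubleton_eq_iff)
  define c where "c = (\<lambda>x. case x of P3 \<Rightarrow> P3 | Q3 \<Rightarrow> Q3 | _ \<Rightarrow> R)"
  have W: "ex_V - {V3} = {R, V1, V2, P1, P2, P3, Q1, Q2, Q3}" by (auto simp: ex_V_def)
  have "\<forall>x\<in>{R, V1, V2, P1, P2, P3, Q1, Q2, Q3}. c x \<in> {P3, Q3, R} \<and> (c x, x) \<in> (adj_in (ex_V - {V3}) (ex_T))\<^sup>*" using g_P3_P3 g_Q3_Q3 g_R_R g_R_V1 g_R_V2 g_R_P1 g_R_Q1 g_R_P2 g_R_Q2 by (simp add: c_def)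
  hence c: "\<forall>x\<in>ex_V - {V3}. c x \<in> {P3, Q3, R} \<and> (c x, x) \<in> (adj_in (ex_V - {V3}) (ex_T))\<^sup>*" by (simp only: W)
  have a: "P3 \<in> ex_V - {V3}" "Q3 \<in> ex_V - {V3}" "R \<in> ex_V - {V3}" by (simp_all add: ex_V_def)
  obtain B where PB: "P = {B P3, B Q3, B R}" and cr: "\<forall>x\<in>ex_V - {V3}. \<forall>y\<in>ex_V - {V3}. crosses V3 P {x,y} \<longleftrightarrow> B (c x) \<noteq> B (c y)"
    using part_blocks[OF P c a] by blast
  have cr2: "crosses V3 P {x,y} \<longleftrightarrow> B (c x) \<noteq> B (c y)" if "x \<in> ex_V - {V3}" "y \<in> ex_V - {V3}" for x y using cr that by blast
  have "(\<Sum>l\<in>{l\<in>ex_L. crosses V3 P l}. x_hat l) = (\<Sum>l\<in>ex_L. if crosses V3 P l then 1/2 else 0)"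
    unfolding sum.inter_filter[OF finite_ex_L] by (rule sum.cong) (auto simp: x_hat_def)
  also have "\<dots> \<ge> real (card {B P3, B Q3, B R}) - 1"
    by (cases "B P3 = B Q3"; cases "B P3 = B R"; cases "B Q3 = B R") (simp_all add: ex_L_def cr2 ex_V_def c_def doubleton_eq_iff card_insert_if)
  finally show ?thesis unfolding PB .
qed


lemma leaf_cov:
  assumes F: "tap_feasible ex_V ex_T ex_L F"
    and pv: "(p,v) \<in> {(P1,V1),(Q1,V1),(P2,V2),(Q2,V2),(P3,V3),(Q3,V3)}"
  shows "\<exists>l\<in>F. p \<in> l"
proof (rule ccontr)
  assume nf: "\<not> (\<exists>l\<in>F. p \<in> l)"
  have vin: "v \<in> ex_V" using pv by (auto simp: ex_V_def)
  have conn: "connected_on (ex_V - {v}) (ex_T \<union> F)"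
    using F vin by (auto simp: tap_feasible_def two_node_connected_def)
  have pin: "p \<in> ex_V - {v}" and Rin: "R \<in> ex_V - {v}" using pv by (auto simp: ex_V_def)
  have "(p,R) \<in> (adj_in (ex_V - {v}) (ex_T \<union> F))\<^sup>*" using conn pin Rin by (simp add: connected_on_def)
  moreover have "\<And>y. (p,y) \<notin> adj_in (ex_V - {v}) (ex_T \<union> F)"
  proof
    fix y assume "(p,y) \<in> adj_in (ex_V - {v}) (ex_T \<union> F)"
    hence e: "{p,y} \<in> ex_T \<union> F" and yv: "y \<noteq> v" by (auto simp: adj_in_def)
    have "{p,y} \<notin> F" using nf by auto
    hence "{p,y} \<in> ex_T" using e by auto
    thus False using pv yv by (auto simp: ex_T_def doubleton_eq_iff)
  qed
  ultimately have "R = p" by (rule no_nbr)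
  thus False using pv by auto
qed

lemma card_lb:
  assumes F: "tap_feasible ex_V ex_T ex_L F"
  shows "card F \<ge> 4"
proof -
  have FL: "F \<subseteq> ex_L" using F by (simp add: tap_feasible_def)
  have fin: "finite F" using FL finite_ex_L finite_subset by blast
  have cov: "\<And>p v. (p,v) \<in> {(P1,V1),(Q1,V1),(P2,V2),(Q2,V2),(P3,V3),(Q3,V3)} \<Longrightarrow> \<exists>l\<in>F. p \<in> l"
    using leaf_cov[OF F] by blast
  have h1: "{P1,P2} \<in> F \<or> {P3,P1} \<in> F" using cov[of P1 V1] FL by (auto simp: ex_L_def)
  have h2: "{P1,P2} \<in> F \<or> {P2,P3} \<in> F" using cov[of P2 V2] FL by (auto simp: ex_L_def)
  have h3: "{P2,P3} \<in> F \<or> {P3,P1} \<in> F" using cov[of P3 V3] FL by (auto simp: ex_L_def)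
  have k1: "{Q1,Q2} \<in> F \<or> {Q3,Q1} \<in> F" using cov[of Q1 V1] FL by (auto simp: ex_L_def)
  have k2: "{Q1,Q2} \<in> F \<or> {Q2,Q3} \<in> F" using cov[of Q2 V2] FL by (auto simp: ex_L_def)
  have k3: "{Q2,Q3} \<in> F \<or> {Q3,Q1} \<in> F" using cov[of Q3 V3] FL by (auto simp: ex_L_def)
  have "\<exists>x1 x2. x1 \<in> F \<and> x2 \<in> F \<and> x1 \<in> {{P1,P2},{P2,P3},{P3,P1}} \<and> x2 \<in> {{P1,P2},{P2,P3},{P3,P1}} \<and> x1 \<noteq> x2"
    using h1 h2 h3 by (auto simp: doubleton_eq_iff)
  then obtain x1 x2 where x: "x1 \<in> F" "x2 \<in> F" "x1 \<in> {{P1,P2},{P2,P3},{P3,P1}}" "x2 \<in> {{P1,P2},{P2,P3},{P3,P1}}" "x1 \<noteq> x2" by blast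
  have "\<exists>y1 y2. y1 \<in> F \<and> y2 \<in> F \<and> y1 \<in> {{Q1,Q2},{Q2,Q3},{Q3,Q1}} \<and> y2 \<in> {{Q1,Q2},{Q2,Q3},{Q3,Q1}} \<and> y1 \<noteq> y2"
    using k1 k2 k3 by (auto simp: doubleton_eq_iff)
  then obtain y1 y2 where y: "y1 \<in> F" "y2 \<in> F" "y1 \<in> {{Q1,Q2},{Q2,Q3},{Q3,Q1}}" "y2 \<in> {{Q1,Q2},{Q2,Q3},{Q3,Q1}}" "y1 \<noteq> y2" by blast
  have d: "x1 \<noteq> y1" "x1 \<noteq> y2" "x2 \<noteq> y1" "x2 \<noteq> y2" using x(3,4) y(3,4) by (auto simp: doubleton_eq_iff)
  have "card {x1,x2,y1,y2} = 4" using d x(5) y(5) by simp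
  moreover have "card {x1,x2,y1,y2} \<le> card F" using x y fin by (intro card_mono) auto
  ultimately show ?thesis by simp
qed

lemma cost_card: "F \<subseteq> ex_L \<Longrightarrow> (\<Sum>l\<in>F. ex_cost l) = real (card F)"
proof -
  assume FL: "F \<subseteq> ex_L"
  have "(\<Sum>l\<in>F. ex_cost l) = (\<Sum>l\<in>F. 1)" by (rule sum.cong) (use FL in \<open>auto simp: ex_cost_def\<close>)
  thus ?thesis by simp
qed

lemma deg_leaf:
  assumes pv: "(p,v) \<in> {(P1,V1),(Q1,V1),(P2,V2),(Q2,V2),(P3,V3),(Q3,V3)}"
  shows "degree ex_T p = 1"
proof -
  have "{e \<in> ex_T. p \<in> e} = {{v,p}}" using pv by (auto simp: ex_T_def doubleton_eq_iff)
  thus ?thesis by (simp add: degree_def)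
qed

lemma nonleaf: "nonleaf_nodes ex_V ex_T \<subseteq> {R,V1,V2,V3}"
proof
  fix x assume x: "x \<in> nonleaf_nodes ex_V ex_T"
  hence d: "degree ex_T x \<ge> 2" by (simp add: nonleaf_nodes_def)
  show "x \<in> {R,V1,V2,V3}"
  proof (cases x)
  qed (use d deg_leaf[of P1 V1] deg_leaf[of P2 V2] deg_leaf[of P3 V3] deg_leaf[of Q1 V1] deg_leaf[of Q2 V2] deg_leaf[of Q3 V3] in auto)
qed

lemma F0_feasible: "tap_feasible ex_V ex_T ex_L F0"
proof -
  have W: "ex_V = {R, V1, V2, V3, P1, P2, P3, Q1, Q2, Q3}" by (simp add: ex_V_def)
  have "\<forall>u\<in>{R, V1, V2, V3, P1, P2, P3, Q1, Q2, Q3}. connected_on (ex_V - {u}) (ex_T \<union> F0)"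
    using conn_F0_R conn_F0_V1 conn_F0_V2 conn_F0_V3 conn_F0_P1 conn_F0_P2 conn_F0_P3 conn_F0_Q1 conn_F0_Q2 conn_F0_Q3 by simp
  hence all: "\<forall>u\<in>ex_V. connected_on (ex_V - {u}) (ex_T \<union> F0)" by (simp only: W)
  have "card ex_V = 10" by (simp add: ex_V_def)
  moreover have "finite ex_V" by (simp add: ex_V_def)
  moreover have "F0 \<subseteq> ex_L" by (simp add: F0_def ex_L_def)
  ultimately show ?thesis using all conn_F0_all
    by (simp add: tap_feasible_def two_node_connected_def)
qed

lemma F0_cost: "(\<Sum>l\<in>F0. ex_cost l) = 4"
proof -
  have "F0 \<subseteq> ex_L" by (simp add: F0_def ex_L_def)
  hence "(\<Sum>l\<in>F0. ex_cost l) = real (card F0)" by (rule cost_card)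
  moreover have "card F0 = 4" by (simp add: F0_def doubleton_eq_iff)
  ultimately show ?thesis by simp
qed

lemma lp_feas: "partition_lp_feasible ex_V ex_T ex_L x_hat"
  unfolding partition_lp_feasible_def
proof (intro conjI ballI)
  fix l assume "l \<in> ex_L" thus "x_hat l \<ge> 0" by (simp add: x_hat_def)
next
  fix u P assume u: "u \<in> nonleaf_nodes ex_V ex_T" and P: "P \<in> Pi_u ex_V ex_T u"
  from u nonleaf have "u \<in> {R,V1,V2,V3}" by blast
  thus "(\<Sum>l\<in>{l\<in>ex_L. crosses u P l}. x_hat l) \<ge> real (card P) - 1"
    using lp_R[of P] lp_V1[of P] lp_V2[of P] lp_V3[of P] P by auto
qed

lemma lp_cost: "(\<Sum>l\<in>ex_L. ex_cost l * x_hat l) = 3"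
proof -
  have "(\<Sum>l\<in>ex_L. ex_cost l * x_hat l) = (\<Sum>l\<in>ex_L. 1/2)"
    by (rule sum.cong) (auto simp: ex_cost_def x_hat_def)
  moreover have "card ex_L = 6" by (simp add: ex_L_def doubleton_eq_iff)
  ultimately show ?thesis by simp
qed

theorem mainTheorem7:
  shows "(\<forall>F. tap_feasible ex_V ex_T ex_L F \<longrightarrow> (\<Sum>l\<in>F. ex_cost l) \<ge> 4)
    \<and> (\<exists>F. tap_feasible ex_V ex_T ex_L F \<and> (\<Sum>l\<in>F. ex_cost l) = 4)
    \<and> partition_lp_feasible ex_V ex_T ex_L x_hat
    \<and> (\<Sum>l\<in>ex_L. ex_cost l * x_hat l) = 3
    \<and> (\<forall>F. tap_feasible ex_V ex_T ex_L F \<longrightarrow>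
          (\<Sum>l\<in>F. ex_cost l) \<ge> 4/3 * (\<Sum>l\<in>ex_L. ex_cost l * x_hat l))"
proof -
  have p1: "\<forall>F. tap_feasible ex_V ex_T ex_L F \<longrightarrow> (\<Sum>l\<in>F. ex_cost l) \<ge> 4"
  proof (intro allI impI)
    fix F assume F: "tap_feasible ex_V ex_T ex_L F"
    hence "(\<Sum>l\<in>F. ex_cost l) = real (card F)" by (intro cost_card) (simp add: tap_feasible_def)
    thus "(\<Sum>l\<in>F. ex_cost l) \<ge> 4" using card_lb[OF F] by simp
  qed
  show ?thesis using p1 F0_feasible F0_cost lp_feas lp_cost by auto
qed

end
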